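(* Let $\mathcal V$ be a finite set of variables ranging over $\mathbb{N}$ and let $\Sigma=\mathcal V\cup\{\underline{x} : x\in\mathcal V\}$ (a fresh underlined copy of each variable). Every equation of one of the forms $x=c$ (with $c\in\mathbb{N}$), $x+y=z$, or $x\cdot y=z$, where $x,y,z\in\mathcal V$ are pairwise distinct variables, is encoded by some language $L\subseteq\Sigma^*$ that is definable by a regulated $\mathsf{C\text{-}RASP}$ formula.
   Context: $\mathsf{C\text{-}RASP}$ formulas over a finite alphabet $\Sigma$: $\phi ::= \sigma \mid \Diamond^{-}\phi \mid \Box^{-}\phi \mid \neg\phi \mid \phi_1\wedge\phi_2 \mid \sum_{t\in\mathcal{T}}\alpha_t t\sim k$, terms $t ::= \#[\phi] \mid c$, with $\sigma\in\Sigma$, $\alpha_t,k,c\in\mathbb{Z}$, ${\sim}\in\{<,\le,=,\ge,>\}$. Semantics at position $i$ of $w=w_1\cdots w_n$: $w,i\models\sigma$ iff $w_i=\sigma$; Boolean connectives as usual; $w,i\models\Diamond^{-}\phi$ iff $w,j\models\phi$ for some $j<i$; $w,i\models\Box^{-}\phi$ iff $w,j\models\phi$ for all $j\le i$; $\#[\phi]$ evaluates to $|\{j\in[1,i]: w,j\models\phi\}|$, $c$ to $c$, and comparisons are integer comparisons. $w\models\phi$ iff $w,|w|\models\phi$; $\phi$ defines $L(\phi)=\{w: w\models\phi\}$. A formula is regulated if no atomic formula $\sigma$ ($\sigma\in\Sigma$) occurs outside the scope of a counting operator $\#$. For $w\in\Sigma^*$ and $\sigma\in\Sigma$, $|w|_\sigma$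 is the number of occurrences of $\sigma$ in $w$. A language $L\subseteq\Sigma^*$ encodes an equation $\mathcal D$ over variables $x_1,\dots,x_m\in\mathcal V\subseteq\Sigma$ if (i) for every $w\in L$, the assignment $x_i\mapsto|w|_{x_i}$ satisfies $\mathcal D$, and (ii) for all $n_1,\dots,n_m\in\mathbb N$ satisfying $\mathcal D$ there is $w\in L$ with $|w|_{x_i}=n_i$ for all $i\in[m]$. *)

theory Defs
  imports Main
begin

datatype cmp = CLt | CLe | CEq | CGe | CGt

datatype 'a crasp =
    Atom 'a
  | DiaM "'a crasp"
  | BoxM "'a crasp"
  | Neg "'a crasp"
  | Conj "'a crasp" "'a crasp"
  | Cmp "(int \<times> 'a cterm) list" cmp int
and 'a cterm =
    Count "'a crasp"
  | CConst int

fun cmp_sem :: "cmp \<Rightarrow> int \<Rightarrow> int \<Rightarrow> bool" where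
  "cmp_sem CLt a b = (a < b)"
| "cmp_sem CLe a b = (a \<le> b)"
| "cmp_sem CEq a b = (a = b)"
| "cmp_sem CGe a b = (a \<ge> b)"
| "cmp_sem CGt a b = (a > b)"

text \<open>Positions are 1-based: position i refers to the list element w ! (i - 1).\<close>
fun sat :: "'a list \<Rightarrow> nat \<Rightarrow> 'a crasp \<Rightarrow> bool"
and tval :: "'a list \<Rightarrow> nat \<Rightarrow> 'a cterm \<Rightarrow> int" where
  "sat w i (Atom s) = (1 \<le> i \<and> i \<le> length w \<and> w ! (i - 1) = s)"
| "sat w i (DiaM f) = (\<exists>j. 1 \<le> j \<and> j < i \<and> sat w j f)"
| "sat w i (BoxM f) = (\<forall>j. 1 \<le> j \<and> j \<le> i \<longrightarrow> sat w j f)"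
| "sat w i (Neg f) = (\<not> sat w i f)"
| "sat w i (Conj f g) = (sat w i f \<and> sat w i g)"
| "sat w i (Cmp ts r k) = cmp_sem r (sum_list (map (\<lambda>at. fst at * tval w i (snd at)) ts)) k"
| "tval w i (Count f) = int (card {j. 1 \<le> j \<and> j \<le> i \<and> sat w j f})"
| "tval w i (CConst c) = c"

fun atoms :: "'a crasp \<Rightarrow> 'a set"
and tatoms :: "'a cterm \<Rightarrow> 'a set" where
  "atoms (Atom s) = {s}"
| "atoms (DiaM f) = atoms f"
| "atoms (BoxM f) = atoms f"
| "atoms (Neg f) = atoms f"
| "atoms (Conj f g) = atoms f \<union> atoms g"
| "atoms (Cmp ts r k) = (\<Union>at\<in>set ts. tatoms (snd at))"
| "tatoms (Count f) = atoms f"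
| "tatoms (CConst c) = {}"

text \<open>Regulated: no atomic formula outside the scope of a counting operator.\<close>
fun regulated :: "'a crasp \<Rightarrow> bool" where
  "regulated (Atom s) = False"
| "regulated (DiaM f) = regulated f"
| "regulated (BoxM f) = regulated f"
| "regulated (Neg f) = regulated f"
| "regulated (Conj f g) = (regulated f \<and> regulated g)"
| "regulated (Cmp ts r k) = True"

definition lang :: "'a set \<Rightarrow> 'a crasp \<Rightarrow> 'a list set" where
  "lang Sig f = {w. set w \<subseteq> Sig \<and> sat w (length w) f}"

text \<open>Letters: a variable x (Var x) or its underlined copy (Und x).\<close>
datatype 'v letter = Var 'v | Und 'v

definition alphabet :: "'v set \<Rightarrow> 'v letter set" where
  "alphabet V = Var ` V \<union> Und ` V"

datatype 'v eqn = EqConst 'v nat | EqAdd 'v 'v 'v | EqMul 'v 'v 'v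

fun eqn_sat :: "'v eqn \<Rightarrow> ('v \<Rightarrow> nat) \<Rightarrow> bool" where
  "eqn_sat (EqConst x c) a = (a x = c)"
| "eqn_sat (EqAdd x y z) a = (a x + a y = a z)"
| "eqn_sat (EqMul x y z) a = (a x * a y = a z)"

fun eqn_vars :: "'v eqn \<Rightarrow> 'v set" where
  "eqn_vars (EqConst x c) = {x}"
| "eqn_vars (EqAdd x y z) = {x, y, z}"
| "eqn_vars (EqMul x y z) = {x, y, z}"

fun eqn_wf :: "'v set \<Rightarrow> 'v eqn \<Rightarrow> bool" where
  "eqn_wf V (EqConst x c) = (x \<in> V)"
| "eqn_wf V (EqAdd x y z) = (x \<in> V \<and> y \<in> V \<and> z \<in> V \<and> x \<noteq> y \<and> x \<noteq> z \<and> y \<noteq> z)"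
| "eqn_wf V (EqMul x y z) = (x \<in> V \<and> y \<in> V \<and> z \<in> V \<and> x \<noteq> y \<and> x \<noteq> z \<and> y \<noteq> z)"

definition letter_count :: "'v letter list \<Rightarrow> 'v \<Rightarrow> nat" where
  "letter_count w x = count_list w (Var x)"

definition encodes :: "'v letter list set \<Rightarrow> 'v eqn \<Rightarrow> bool" where
  "encodes L D \<longleftrightarrow>
     (\<forall>w\<in>L. eqn_sat D (letter_count w)) \<and>
     (\<forall>n. eqn_sat D n \<longrightarrow> (\<exists>w\<in>L. \<forall>x\<in>eqn_vars D. letter_count w x = n x))"

end

theory Submission
  imports Defs
begin

lemma count_list_replicate[simp]: "count_list (replicate n c) s = (if c = s then n else 0)"
  by (induction n) auto

definition cnt :: "'a \<Rightarrow> 'a cterm" where "cnt s = Count (Atom s)"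
definition ALLP :: "'a crasp \<Rightarrow> 'a crasp" where "ALLP P = Cmp [(1, Count (Neg P))] CEq 0"
definition IMP :: "'a \<Rightarrow> 'a crasp \<Rightarrow> 'a crasp" where "IMP s Q = Neg (Conj (Atom s) (Neg Q))"

lemma tval_cnt: "tval w j (cnt s) = int (count_list (take j w) s)"
proof (induction j)
  case 0
  then show ?case by (simp add: cnt_def)
next
  case (Suc j)
  have eq: "{k. 1 \<le> k \<and> k \<le> Suc j \<and> sat w k (Atom s)} =
        {k. 1 \<le> k \<and> k \<le> j \<and> sat w k (Atom s)} \<union>
        (if Suc j \<le> length w \<and> w ! j = s then {Suc j} else {})"
    by (auto simp: le_Suc_eq)
  have fin: "finite {k. 1 \<le> k \<and> k \<le> j \<and> sat w k (Atom s)}" by auto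
  have t: "tval w (Suc j) (cnt s) = int (card ({k. 1 \<le> k \<and> k \<le> j \<and> sat w k (Atom s)} \<union>
        (if Suc j \<le> length w \<and> w ! j = s then {Suc j} else {})))"
    by (simp only: cnt_def tval.simps(1) eq)
  have ih: "int (card {k. 1 \<le> k \<and> k \<le> j \<and> sat w k (Atom s)}) = int (count_list (take j w) s)"
    using Suc by (simp only: cnt_def tval.simps(1))
  show ?case
  proof (cases "j < length w")
    case True
    then show ?thesis using ih fin t
      by (simp add: take_Suc_conv_app_nth)
  next
    case False
    then show ?thesis using ih fin t
      by simp
  qed
qed

lemma sat_ALLP: "sat w (length w) (ALLP P) \<longleftrightarrow> (\<forall>j. 1 \<le> j \<and> j \<le> length w \<longrightarrow> sat w j P)"
proof -
  have "finite {j. 1 \<le> j \<and> j \<le> length w \<and> sat w j (Neg P)}" by auto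
  then show ?thesis by (auto simp: ALLP_def)
qed

lemma sat_IMP: "sat w j (IMP s Q) \<longleftrightarrow> ((1 \<le> j \<and> j \<le> length w \<and> w ! (j - 1) = s) \<longrightarrow> sat w j Q)"
  by (auto simp: IMP_def)

lemma last_take: "1 \<le> j \<Longrightarrow> j \<le> length w \<Longrightarrow> last (take j w) = w ! (j - 1)"
proof -
  assume a: "1 \<le> j" "j \<le> length w"
  then obtain i where "j = Suc i" by (cases j) auto
  with a show ?thesis by (simp add: take_Suc_conv_app_nth)
qed

definition lin :: "(int \<times> 'a) list \<Rightarrow> int \<Rightarrow> 'a crasp" where
  "lin ts k = Cmp (map (\<lambda>(c, s). (c, cnt s)) ts) CEq k"

lemma sat_lin: "sat w j (lin ts k) \<longleftrightarrow> sum_list (map (\<lambda>(c, s). c * int (count_list (take j w) s)) ts) = k"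
proof -
  have "map (\<lambda>at. fst at * tval w j (snd at)) (map (\<lambda>(c, s). (c, cnt s)) ts)
      = map (\<lambda>(c, s). c * int (count_list (take j w) s)) ts"
    by (auto simp: tval_cnt)
  then show ?thesis by (simp only: lin_def sat.simps cmp_sem.simps)
qed

definition Pm :: "'v \<Rightarrow> 'v \<Rightarrow> 'v \<Rightarrow> 'v letter crasp" where
  "Pm x y z = Conj (IMP (Var x) (lin [(1,Var y)] 0))
     (Conj (IMP (Var y) (Conj (lin [(1,Var z),(-1,Und z)] 0) (lin [(1,Var y),(-1,Und y)] 1)))
     (Conj (IMP (Und y) (Conj (lin [(1,Var z),(-1,Und z),(-1,Var x)] 0) (lin [(1,Var y),(-1,Und y)] 0)))
     (Conj (IMP (Var z) (lin [(1,Var y),(-1,Und y)] 1)) (IMP (Und z) (lin [(1,Var y),(-1,Und y)] 0)))))"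

definition Phim :: "'v \<Rightarrow> 'v \<Rightarrow> 'v \<Rightarrow> 'v letter crasp" where
  "Phim x y z = Conj (ALLP (Pm x y z)) (lin [(1,Var y),(-1,Und y)] 0)"

definition okp :: "'v \<Rightarrow> 'v \<Rightarrow> 'v \<Rightarrow> 'v letter list \<Rightarrow> bool" where
  "okp x y z u = (let C = (\<lambda>s. int (count_list u s)) in
     (last u = Var x \<longrightarrow> C (Var y) = 0) \<and>
     (last u = Var y \<longrightarrow> C (Var z) - C (Und z) = 0 \<and> C (Var y) - C (Und y) = 1) \<and>
     (last u = Und y \<longrightarrow> C (Var z) - C (Und z) - C (Var x) = 0 \<and> C (Var y) - C (Und y) = 0) \<and>
     (last u = Var z \<longrightarrow> C (Var y) - C (Und y) = 1) \<and>
     (last u = Und z \<longrightarrow> C (Var y) - C (Und y) = 0))"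

lemma sat_Pm: "1 \<le> j \<Longrightarrow> j \<le> length w \<Longrightarrow> sat w j (Pm x y z) \<longleftrightarrow> okp x y z (take j w)"
  by (simp add: Pm_def okp_def sat_IMP sat_lin last_take Let_def algebra_simps)

definition allok :: "'v \<Rightarrow> 'v \<Rightarrow> 'v \<Rightarrow> 'v letter list \<Rightarrow> bool" where
  "allok x y z w = (\<forall>j. 1 \<le> j \<and> j \<le> length w \<longrightarrow> okp x y z (take j w))"

lemma sat_Phim: "sat w (length w) (Phim x y z) \<longleftrightarrow>
   allok x y z w \<and> count_list w (Var y) = count_list w (Und y)"
  by (auto simp: Phim_def sat_ALLP sat_Pm allok_def sat_lin)

lemma allok_Nil[simp]: "allok x y z []"
  by (simp add: allok_def)

lemma allok_snoc: "allok x y z (u @ [c]) \<longleftrightarrow> allok x y z u \<and> okp x y z (u @ [c])"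
proof -
  have "(\<forall>j. 1 \<le> j \<and> j \<le> Suc (length u) \<longrightarrow> okp x y z (take j (u @ [c])))
     \<longleftrightarrow> (\<forall>j. 1 \<le> j \<and> j \<le> length u \<longrightarrow> okp x y z (take j u)) \<and> okp x y z (u @ [c])"
    by (auto simp: le_Suc_eq)
  then show ?thesis by (simp add: allok_def)
qed

lemma inv_mul:
  assumes "x \<noteq> y" "x \<noteq> z" "y \<noteq> z"
  shows "allok x y z u \<Longrightarrow>
    (count_list u (Var y) = 0 \<longrightarrow> count_list u (Und y) = 0 \<and> count_list u (Var z) = 0) \<and>
    (count_list u (Var y) \<noteq> 0 \<longrightarrow>
      (count_list u (Var y) = count_list u (Und y) \<and> count_list u (Var z) = count_list u (Var x) * count_list u (Und y)) \<or>
      (count_list u (Var y) = Suc (count_list u (Und y)) \<and> count_list u (Und z) = count_list u (Var x) * count_list u (Und y)))"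
proof (induction u rule: rev_induct)
  case Nil
  then show ?case by simp
next
  case (snoc c u)
  then have IH: "(count_list u (Var y) = 0 \<longrightarrow> count_list u (Und y) = 0 \<and> count_list u (Var z) = 0) \<and>
    (count_list u (Var y) \<noteq> 0 \<longrightarrow>
      (count_list u (Var y) = count_list u (Und y) \<and> count_list u (Var z) = count_list u (Var x) * count_list u (Und y)) \<or>
      (count_list u (Var y) = Suc (count_list u (Und y)) \<and> count_list u (Und z) = count_list u (Var x) * count_list u (Und y)))"
    and ok: "okp x y z (u @ [c])" by (auto simp: allok_snoc)
  define X where "X = count_list u (Var x)"
  define Y where "Y = count_list u (Var y)"
  define Z where "Z = count_list u (Var z)"
  define UY where "UY = count_list u (Und y)"
  define UZ where "UZ = count_list u (Und z)"
  note defs = X_def Y_def Z_def UY_def UZ_def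
  have I: "(Y = 0 \<longrightarrow> UY = 0 \<and> Z = 0) \<and> (Y \<noteq> 0 \<longrightarrow> (Y = UY \<and> Z = X * UY) \<or> (Y = Suc UY \<and> UZ = X * UY))"
    using IH unfolding defs .
  consider "c = Var x" | "c = Var y" | "c = Var z" | "c = Und y" | "c = Und z"
    | "c \<noteq> Var x" "c \<noteq> Var y" "c \<noteq> Var z" "c \<noteq> Und y" "c \<noteq> Und z" by blast
  then show ?case
  proof cases
    case 1
    then have "Y = 0" using ok assms by (simp add: okp_def Let_def defs)
    then show ?thesis using I 1 assms by (simp add: defs[symmetric])
  next
    case 2
    then have h: "int Z - int UZ = 0" "int (Suc Y) - int UY = 1" using ok assms by (simp_all add: okp_def Let_def defs)
    have "(Suc Y = 0 \<longrightarrow> UY = 0 \<and> Z = 0) \<and> (Suc Y \<noteq> 0 \<longrightarrow> (Suc Y = UY \<and> Z = X * UY) \<or> (Suc Y = Suc UY \<and> UZ = X * UY))"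
    proof -
      have "Z = UZ" "Y = UY" using h by auto
      then show ?thesis using I by (cases "Y = 0") auto
    qed
    then show ?thesis using 2 assms by (simp add: defs[symmetric])
  next
    case 3
    then have h: "int Y - int UY = 1" using ok assms by (simp_all add: okp_def Let_def defs)
    have "(Y = 0 \<longrightarrow> UY = 0 \<and> Suc Z = 0) \<and> (Y \<noteq> 0 \<longrightarrow> (Y = UY \<and> Suc Z = X * UY) \<or> (Y = Suc UY \<and> UZ = X * UY))"
      using I h by auto
    then show ?thesis using 3 assms by (simp add: defs[symmetric])
  next
    case 4
    then have h: "int Z - int UZ - int X = 0" "int Y - int (Suc UY) = 0" using ok assms by (simp_all add: okp_def Let_def defs)
    have "Y \<noteq> 0 \<and> Y = Suc UY \<and> UZ = X * UY" using I h by auto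
    moreover have "Z = UZ + X" using h by linarith
    ultimately have "Z = X * Suc UY" by simp
    then have "(Y = 0 \<longrightarrow> Suc UY = 0 \<and> Z = 0) \<and> (Y \<noteq> 0 \<longrightarrow> (Y = Suc UY \<and> Z = X * Suc UY) \<or> (Y = Suc (Suc UY) \<and> UZ = X * Suc UY))"
      using \<open>Y \<noteq> 0 \<and> Y = Suc UY \<and> UZ = X * UY\<close> by auto
    then show ?thesis using 4 assms by (simp add: defs[symmetric])
  next
    case 5
    then have h: "int Y - int UY = 0" using ok assms by (simp_all add: okp_def Let_def defs)
    have "(Y = 0 \<longrightarrow> UY = 0 \<and> Z = 0) \<and> (Y \<noteq> 0 \<longrightarrow> (Y = UY \<and> Z = X * UY) \<or> (Y = Suc UY \<and> Suc UZ = X * UY))"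
      using I h by auto
    then show ?thesis using 5 assms by (simp add: defs[symmetric])
  next
    case 6
    then show ?thesis using I by (simp add: defs[symmetric])
  qed
qed

lemma sound_mul:
  assumes "x \<noteq> y" "x \<noteq> z" "y \<noteq> z" "allok x y z u" "count_list u (Var y) = count_list u (Und y)"
  shows "count_list u (Var x) * count_list u (Var y) = count_list u (Var z)"
  using inv_mul[OF assms(1-4)] assms(5) by auto

lemma allok_rep:
  "allok x y z u \<Longrightarrow> (\<And>i. 1 \<le> i \<Longrightarrow> i \<le> n \<Longrightarrow> okp x y z (u @ replicate i c))
   \<Longrightarrow> allok x y z (u @ replicate n c)"
proof (induction n)
  case 0
  then show ?case by simp
next
  case (Suc n)
  have e: "u @ replicate (Suc n) c = (u @ replicate n c) @ [c]"
    by (simp add: replicate_append_same)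
  have ih: "allok x y z (u @ replicate n c)" using Suc by auto
  have ok: "okp x y z (u @ replicate (Suc n) c)" using Suc.prems(2)[of "Suc n"] by simp
  show ?case unfolding e allok_snoc using ih ok[unfolded e] by blast
qed

definition blk :: "nat \<Rightarrow> 'v \<Rightarrow> 'v \<Rightarrow> 'v letter list" where
  "blk a y z = Var y # replicate a (Var z) @ Und y # replicate a (Und z)"

definition W :: "nat \<Rightarrow> nat \<Rightarrow> 'v \<Rightarrow> 'v \<Rightarrow> 'v \<Rightarrow> 'v letter list" where
  "W a k x y z = replicate a (Var x) @ concat (replicate k (blk a y z))"

lemma count_concat_rep: "count_list (concat (replicate k B)) s = k * count_list B s"
  by (induction k) auto

lemma concat_rep_Suc: "concat (replicate (Suc k) B) = concat (replicate k B) @ B"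
proof -
  have "replicate (Suc k) B = replicate k B @ [B]" by (simp add: replicate_append_same)
  then show ?thesis by simp
qed

lemma W_counts:
  assumes "x \<noteq> y" "x \<noteq> z" "y \<noteq> z"
  shows "count_list (W a k x y z) (Var x) = a" "count_list (W a k x y z) (Var y) = k"
    "count_list (W a k x y z) (Var z) = a * k" "count_list (W a k x y z) (Und y) = k"
    "count_list (W a k x y z) (Und z) = a * k"
  using assms by (auto simp: W_def count_concat_rep blk_def)

lemma W_ok:
  assumes "x \<noteq> y" "x \<noteq> z" "y \<noteq> z"
  shows "allok x y z (W a k x y z)"
proof (induction k)
  case 0
  have "allok x y z ([] @ replicate a (Var x))"
    by (rule allok_rep) (use assms in \<open>auto simp: okp_def Let_def\<close>)
  then show ?case by (simp add: W_def)
next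
  case (Suc k)
  define u where "u = W a k x y z"
  note cs = W_counts[OF assms, of a k, folded u_def]
  have 1: "allok x y z (u @ [Var y])"
    using Suc cs assms by (simp add: allok_snoc u_def[symmetric] okp_def Let_def)
  have 2: "allok x y z ((u @ [Var y]) @ replicate a (Var z))"
    by (rule allok_rep[OF 1]) (use cs assms in \<open>auto simp: okp_def Let_def\<close>)
  have 3: "allok x y z (((u @ [Var y]) @ replicate a (Var z)) @ [Und y])"
  proof -
    have "okp x y z (((u @ [Var y]) @ replicate a (Var z)) @ [Und y])"
      using cs assms by (simp add: okp_def Let_def algebra_simps)
    then show ?thesis unfolding allok_snoc using 2 by blast
  qed
  have 4: "allok x y z ((((u @ [Var y]) @ replicate a (Var z)) @ [Und y]) @ replicate a (Und z))"
    by (rule allok_rep[OF 3]) (use cs assms in \<open>auto simp: okp_def Let_def\<close>)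
  have "W a (Suc k) x y z = (((u @ [Var y]) @ replicate a (Var z)) @ [Und y]) @ replicate a (Und z)"
    by (simp only: W_def u_def concat_rep_Suc) (simp add: blk_def)
  then show ?case using 4 by simp
qed

lemma reg_lin[simp]: "regulated (lin ts k)" by (simp add: lin_def)

lemma atoms_lin[simp]: "atoms (lin ts k) = snd ` set ts"
  by (force simp: lin_def cnt_def image_iff)

theorem lemma3p4:
  fixes V :: "'v set" and D :: "'v eqn"
  assumes "finite V" and "eqn_wf V D"
  shows "\<exists>\<phi> :: 'v letter crasp. regulated \<phi> \<and> atoms \<phi> \<subseteq> alphabet V
           \<and> encodes (lang (alphabet V) \<phi>) D"
proof (cases D)
  case (EqConst x c)
  let ?f = "lin [(1, Var x)] (int c) :: 'v letter crasp"
  have "encodes (lang (alphabet V) ?f) D"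
    unfolding encodes_def
  proof (intro conjI allI impI ballI)
    fix w assume "w \<in> lang (alphabet V) ?f"
    then show "eqn_sat D (letter_count w)"
      by (simp add: lang_def sat_lin EqConst letter_count_def)
  next
    fix n :: "'v \<Rightarrow> nat" assume "eqn_sat D n"
    then have "n x = c" by (simp add: EqConst)
    let ?w = "replicate c (Var x)"
    have "?w \<in> lang (alphabet V) ?f"
      using assms by (auto simp: lang_def sat_lin EqConst alphabet_def)
    moreover have "\<forall>v\<in>eqn_vars D. letter_count ?w v = n v"
      using \<open>n x = c\<close> by (simp add: EqConst letter_count_def)
    ultimately show "\<exists>w\<in>lang (alphabet V) ?f. \<forall>v\<in>eqn_vars D. letter_count w v = n v" by blast
  qed
  moreover have "atoms ?f \<subseteq> alphabet V" using assms by (simp add: EqConst alphabet_def)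
  ultimately show ?thesis by (intro exI[of _ ?f]) simp
next
  case (EqAdd x y z)
  let ?f = "lin [(1, Var x), (1, Var y), (-1, Var z)] 0 :: 'v letter crasp"
  have d: "x \<noteq> y" "x \<noteq> z" "y \<noteq> z" "x \<in> V" "y \<in> V" "z \<in> V" using assms by (auto simp: EqAdd)
  have "encodes (lang (alphabet V) ?f) D"
    unfolding encodes_def
  proof (intro conjI allI impI ballI)
    fix w assume "w \<in> lang (alphabet V) ?f"
    then show "eqn_sat D (letter_count w)"
      by (simp add: lang_def sat_lin EqAdd letter_count_def)
  next
    fix n :: "'v \<Rightarrow> nat" assume "eqn_sat D n"
    then have h: "n x + n y = n z" by (simp add: EqAdd)
    let ?w = "replicate (n x) (Var x) @ replicate (n y) (Var y) @ replicate (n z) (Var z)"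
    have "?w \<in> lang (alphabet V) ?f"
      using d h by (auto simp: lang_def sat_lin alphabet_def)
    moreover have "\<forall>v\<in>eqn_vars D. letter_count ?w v = n v"
      using d by (simp add: EqAdd letter_count_def)
    ultimately show "\<exists>w\<in>lang (alphabet V) ?f. \<forall>v\<in>eqn_vars D. letter_count w v = n v" by blast
  qed
  moreover have "atoms ?f \<subseteq> alphabet V" using d by (simp add: alphabet_def)
  ultimately show ?thesis by (intro exI[of _ ?f]) simp
next
  case (EqMul x y z)
  let ?f = "Phim x y z"
  have d: "x \<noteq> y" "x \<noteq> z" "y \<noteq> z" "x \<in> V" "y \<in> V" "z \<in> V" using assms by (auto simp: EqMul)
  have "encodes (lang (alphabet V) ?f) D"
    unfolding encodes_def
  proof (intro conjI allI impI ballI)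
    fix w assume "w \<in> lang (alphabet V) ?f"
    then have "allok x y z w" "count_list w (Var y) = count_list w (Und y)"
      by (auto simp: lang_def sat_Phim)
    then show "eqn_sat D (letter_count w)"
      using sound_mul[OF d(1-3)] by (simp add: EqMul letter_count_def)
  next
    fix n :: "'v \<Rightarrow> nat" assume "eqn_sat D n"
    then have h: "n x * n y = n z" by (simp add: EqMul)
    let ?w = "W (n x) (n y) x y z"
    have "set ?w \<subseteq> alphabet V"
      using d by (auto simp: W_def blk_def alphabet_def)
    moreover have "sat ?w (length ?w) ?f"
      unfolding sat_Phim using W_ok[OF d(1-3)] W_counts[OF d(1-3)] by simp
    ultimately have "?w \<in> lang (alphabet V) ?f" by (simp add: lang_def)
    moreover have "\<forall>v\<in>eqn_vars D. letter_count ?w v = n v"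
      using d h W_counts[OF d(1-3)] by (auto simp: EqMul letter_count_def)
    ultimately show "\<exists>w\<in>lang (alphabet V) ?f. \<forall>v\<in>eqn_vars D. letter_count w v = n v" by blast
  qed
  moreover have "atoms ?f \<subseteq> alphabet V" using d
    by (simp add: Phim_def ALLP_def Pm_def IMP_def alphabet_def)
  moreover have "regulated ?f" by (simp add: Phim_def ALLP_def)
  ultimately show ?thesis by blast
qed

end
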